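(* Let $V$ be a finite nonempty set and $f:\{0,1\}^V\to\{0,1\}^V$. The conjugate of every subnetwork of $f$ is a bijection if and only if $f$ has no even-self-dual and no odd-self-dual subnetwork.
   Context: For $x,y\in\{0,1\}^V$, $x\oplus y$ is componentwise addition mod 2, $1$ denotes the all-ones point, and $\|x\|$ is the number of components of $x$ equal to $1$; $x$ is even (odd) if $\|x\|$ is even (odd). The conjugate of a network $g$ on $W$ is $\tilde g(x)=g(x)\oplus x$. For a nonempty $I\subseteq V$ and $z\in\{0,1\}^{V\setminus I}$, the subnetwork of $f$ induced by $z$ is the network $h:\{0,1\}^I\to\{0,1\}^I$ with $h(x|_I)=f(x)|_I$ for all $x\in\{0,1\}^V$ whose restriction to $V\setminus I$ equals $z$ ($f$ is a subnetwork of itself). A network $g$ on $W$ is self-dual if $g(x\oplus 1)=g(x)\oplus 1$ for all $x$; even (odd) if $\tilde g(\{0,1\}^W)$ is exactly the set of even (odd) points of $\{0,1\}^W$; even-self-dual (odd-self-dual) if both even (odd) and self-dual. *)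

theory Defs
  imports Main
begin

text \<open>Points of {0,1}^I are represented as functions 'v => bool that are False outside I.
  The full vertex set V is the finite nonempty type 'v (V = UNIV).\<close>

definition points :: "'v set \<Rightarrow> ('v \<Rightarrow> bool) set" where
  "points I = {x. \<forall>v. v \<notin> I \<longrightarrow> \<not> x v}"

definition bxor :: "('v \<Rightarrow> bool) \<Rightarrow> ('v \<Rightarrow> bool) \<Rightarrow> ('v \<Rightarrow> bool)" where
  "bxor x y = (\<lambda>v. x v \<noteq> y v)"

definition ones :: "'v set \<Rightarrow> ('v \<Rightarrow> bool)" where
  "ones I = (\<lambda>v. v \<in> I)"

definition weight :: "'v set \<Rightarrow> ('v \<Rightarrow> bool) \<Rightarrow> nat" where
  "weight I x = card {v \<in> I. x v}"

definition conj_net :: "(('v \<Rightarrow> bool) \<Rightarrow> ('v \<Rightarrow> bool)) \<Rightarrow> ('v \<Rightarrow> bool) \<Rightarrow> ('v \<Rightarrow> bool)" where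
  "conj_net g x = bxor (g x) x"

definition subnet :: "(('v \<Rightarrow> bool) \<Rightarrow> ('v \<Rightarrow> bool)) \<Rightarrow> 'v set \<Rightarrow> ('v \<Rightarrow> bool)
    \<Rightarrow> ('v \<Rightarrow> bool) \<Rightarrow> ('v \<Rightarrow> bool)" where
  "subnet f I z = (\<lambda>x. \<lambda>v. v \<in> I \<and> f (\<lambda>w. if w \<in> I then x w else z w) v)"

definition self_dual :: "'v set \<Rightarrow> (('v \<Rightarrow> bool) \<Rightarrow> ('v \<Rightarrow> bool)) \<Rightarrow> bool" where
  "self_dual I g \<longleftrightarrow> (\<forall>x \<in> points I. g (bxor x (ones I)) = bxor (g x) (ones I))"

definition even_net :: "'v set \<Rightarrow> (('v \<Rightarrow> bool) \<Rightarrow> ('v \<Rightarrow> bool)) \<Rightarrow> bool" where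
  "even_net I g \<longleftrightarrow> conj_net g ` points I = {x \<in> points I. even (weight I x)}"

definition odd_net :: "'v set \<Rightarrow> (('v \<Rightarrow> bool) \<Rightarrow> ('v \<Rightarrow> bool)) \<Rightarrow> bool" where
  "odd_net I g \<longleftrightarrow> conj_net g ` points I = {x \<in> points I. odd (weight I x)}"

definition even_self_dual :: "'v set \<Rightarrow> (('v \<Rightarrow> bool) \<Rightarrow> ('v \<Rightarrow> bool)) \<Rightarrow> bool" where
  "even_self_dual I g \<longleftrightarrow> even_net I g \<and> self_dual I g"

definition odd_self_dual :: "'v set \<Rightarrow> (('v \<Rightarrow> bool) \<Rightarrow> ('v \<Rightarrow> bool)) \<Rightarrow> bool" where
  "odd_self_dual I g \<longleftrightarrow> odd_net I g \<and> self_dual I g"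

end

theory Submission imports Defs begin

lemma card_fiber_bij:
  assumes "bij_betw p A B" "b \<in> B"
  shows "card {x\<in>A. p x = b} = 1"
proof -
  obtain a where a: "a\<in>A" "p a = b" using assms unfolding bij_betw_def by blast
  have "{x\<in>A. p x = b} = {a}" using assms a unfolding bij_betw_def inj_on_def by blast
  thus ?thesis by simp
qed

lemma key:
  fixes g :: "('v::finite \<Rightarrow> bool) \<Rightarrow> ('v \<Rightarrow> bool)" and I :: "'v set"
  assumes ne: "I \<noteq> {}" and into: "g ` points I \<subseteq> points I"
    and fib: "\<And>i a. i \<in> I \<Longrightarrow> bij_betw (\<lambda>x. (g x)(i:=False)) {x\<in>points I. x i = a} (points (I-{i}))"
    and nb: "\<not> bij_betw g (points I) (points I)"
  shows "(g ` points I = {x\<in>points I. even (weight I x)} \<or> g ` points I = {x\<in>points I. odd (weight I x)})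
     \<and> (\<forall>x\<in>points I. g (bxor x (ones I)) = g x)"
proof -
  define P where "P = points I"
  define N where "N y = card {x\<in>P. g x = y}" for y
  have gP: "x \<in> P \<Longrightarrow> g x \<in> P" for x using into P_def by blast
  have A: "N y + N (y(i:= \<not> y i)) = 2" if y: "y \<in> P" and i: "i \<in> I" for y i
  proof -
    define y' where "y' = y(i:= \<not> y i)"
    have "y \<noteq> y'" unfolding y'_def by (metis fun_upd_same)
    have "N y + N y' = card ({x\<in>P. g x = y} \<union> {x\<in>P. g x = y'})"
      unfolding N_def by (rule card_Un_disjoint[symmetric]) (use \<open>y \<noteq> y'\<close> in auto)
    also have "{x\<in>P. g x = y} \<union> {x\<in>P. g x = y'} =
       {x\<in>{x\<in>P. x i = True}. (g x)(i:=False) = y(i:=False)} \<union> {x\<in>{x\<in>P. x i = False}. (g x)(i:=False) = y(i:=False)}"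
    proof -
      have "(g x)(i:=False) = y(i:=False) \<longleftrightarrow> g x = y \<or> g x = y'" for x
        unfolding y'_def fun_eq_iff by (metis fun_upd_apply)
      thus ?thesis by auto
    qed
    also have "card \<dots> = card {x\<in>{x\<in>P. x i = True}. (g x)(i:=False) = y(i:=False)} + card {x\<in>{x\<in>P. x i = False}. (g x)(i:=False) = y(i:=False)}"
      by (rule card_Un_disjoint) auto
    also have "\<dots> = 2"
    proof -
      have yy: "y(i:=False) \<in> points (I - {i})" using y unfolding P_def points_def by auto
      show ?thesis using card_fiber_bij[OF fib[OF i, of True, folded P_def] yy]
          card_fiber_bij[OF fib[OF i, of False, folded P_def] yy] by simp
    qed
    finally show ?thesis unfolding y'_def .
  qed
  obtain i0 where i0: "i0 \<in> I" using ne by blast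
  have B: "N y \<le> 2" if "y \<in> P" for y using A[OF that i0] by simp
  define zero :: "'v \<Rightarrow> bool" where "zero = (\<lambda>_. False)"
  have zP: "zero \<in> P" unfolding zero_def P_def points_def by simp
  define c where "c = N zero"
  have c2: "c \<le> 2" using B zP c_def by simp
  have C: "\<forall>y\<in>P. weight I y = n \<longrightarrow> N y = (if even n then c else 2 - c)" for n
  proof (induction n)
    case 0
    show ?case
    proof (intro ballI impI)
      fix y assume y: "y \<in> P" "weight I y = 0"
      have "{v\<in>I. y v} = {}" using y(2) unfolding weight_def by simp
      hence "y = zero" using y(1) unfolding P_def points_def zero_def fun_eq_iff by blast
      thus "N y = (if even 0 then c else 2 - c)" using c_def by simp
    qed
  next
    case (Suc n)
    show ?case
    proof (intro ballI impI)
      fix y assume y: "y \<in> P" "weight I y = Suc n"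
      then obtain i where i: "i \<in> I" "y i" unfolding weight_def
        by (metis (no_types, lifting) card.empty empty_Collect_eq nat.distinct(1))
      define y'' where "y'' = y(i:=False)"
      have y''P: "y'' \<in> P" using y(1) unfolding y''_def P_def points_def by auto
      have "{v\<in>I. y'' v} = {v\<in>I. y v} - {i}" unfolding y''_def by auto
      hence "weight I y'' = n" using y(2) i unfolding weight_def by simp
      hence Ny'': "N y'' = (if even n then c else 2 - c)" using Suc.IH y''P by blast
      have "y = y''(i := \<not> y'' i)" unfolding y''_def using i by (simp add: fun_eq_iff)
      hence "N y'' + N y = 2" using A[OF y''P i(1)] by simp
      thus "N y = (if even (Suc n) then c else 2 - c)" using Ny'' c2 by auto
    qed
  qed
  have C': "N y = (if even (weight I y) then c else 2 - c)" if "y \<in> P" for y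
    using C that by blast
  have pos: "y \<in> g ` P \<longleftrightarrow> y \<in> P \<and> N y > 0" for y
  proof
    assume "y \<in> g ` P" thus "y \<in> P \<and> N y > 0" unfolding N_def using gP
      by (auto simp: card_gt_0_iff)
  next
    assume "y \<in> P \<and> N y > 0" thus "y \<in> g ` P" unfolding N_def
      by (auto simp: card_gt_0_iff)
  qed
  have "c \<noteq> 1"
  proof
    assume c1: "c = 1"
    have N1: "N y = 1" if "y \<in> P" for y using C'[OF that] c1 by simp
    have "inj_on g P"
    proof (rule inj_onI)
      fix x x' assume xx: "x \<in> P" "x' \<in> P" "g x = g x'"
      show "x = x'"
      proof (rule ccontr)
        assume "x \<noteq> x'"
        have "{x, x'} \<subseteq> {w\<in>P. g w = g x}" using xx by auto
        hence "card {x, x'} \<le> N (g x)" unfolding N_def by (intro card_mono) auto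
        thus False using N1[OF gP[OF xx(1)]] \<open>x \<noteq> x'\<close> by simp
      qed
    qed
    moreover have "g ` P = P" using pos N1 by auto
    ultimately show False using nb unfolding bij_betw_def P_def by simp
  qed
  hence c02: "c = 0 \<or> c = 2" using c2 by auto
  have part1: "g ` points I = {x\<in>points I. even (weight I x)} \<or> g ` points I = {x\<in>points I. odd (weight I x)}"
  proof (cases "c = 0")
    case True
    have "g ` P = {x\<in>P. odd (weight I x)}"
    proof (rule set_eqI)
      fix y show "y \<in> g ` P \<longleftrightarrow> y \<in> {x\<in>P. odd (weight I x)}"
        using pos[of y] C'[of y] True by (auto split: if_splits)
    qed
    thus ?thesis unfolding P_def by simp
  next
    case False
    hence "c = 2" using c02 by simp
    have "g ` P = {x\<in>P. even (weight I x)}"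
    proof (rule set_eqI)
      fix y show "y \<in> g ` P \<longleftrightarrow> y \<in> {x\<in>P. even (weight I x)}"
        using pos[of y] C'[of y] \<open>c = 2\<close> by (auto split: if_splits)
    qed
    thus ?thesis unfolding P_def by simp
  qed
  have part2: "g (bxor x (ones I)) = g x" if x: "x \<in> P" for x
  proof -
    define S where "S = {w\<in>P. g w = g x}"
    have "N (g x) > 0" using pos x by blast
    hence "N (g x) = 2" using C'[OF gP[OF x]] c02 by (auto split: if_splits)
    hence cS: "card S = 2" unfolding S_def N_def by simp
    have "x \<in> S" using x S_def by simp
    hence "card (S - {x}) = 1" using cS by simp
    then obtain x' where "S - {x} = {x'}" by (meson card_1_singletonE)
    hence x': "x' \<in> P" "g x' = g x" "x' \<noteq> x" unfolding S_def by auto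
    have "x' = bxor x (ones I)"
    proof
      fix v
      show "x' v = bxor x (ones I) v"
      proof (cases "v \<in> I")
        case False
        thus ?thesis using x x' unfolding P_def points_def bxor_def ones_def by auto
      next
        case True
        have "x' v \<noteq> x v"
        proof
          assume eq: "x' v = x v"
          have "inj_on (\<lambda>x. (g x)(v:=False)) {w\<in>points I. w v = x v}"
            using fib[OF True] bij_betw_def by blast
          hence "x' = x" using x x' eq unfolding P_def inj_on_def by auto
          thus False using x' by simp
        qed
        thus ?thesis using True unfolding bxor_def ones_def by auto
      qed
    qed
    thus ?thesis using x' by simp
  qed
  show ?thesis using part1 part2 P_def by blast
qed

lemma subnet_restrict:
  assumes z: "z \<in> points (- I)" and i: "i \<in> I" and x: "x \<in> points I" "x i = a"
  shows "(conj_net (subnet f I z) x)(i:=False) =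
         conj_net (subnet f (I-{i}) (z(i:=a))) (x(i:=False))"
proof -
  have arg: "(\<lambda>w. if w \<in> I then x w else z w) = (\<lambda>w. if w \<in> I - {i} then (x(i:=False)) w else (z(i:=a)) w)"
    using i x by (auto simp: fun_eq_iff)
  show ?thesis unfolding conj_net_def bxor_def subnet_def arg[symmetric]
    using x i by (auto simp: fun_eq_iff)
qed

lemma subnet_into:
  "conj_net (subnet f I z) ` points I \<subseteq> points I"
  unfolding conj_net_def bxor_def subnet_def points_def by auto

lemma fib_bij:
  fixes f :: "('v::finite \<Rightarrow> bool) \<Rightarrow> ('v \<Rightarrow> bool)"
  assumes z: "z \<in> points (- I)" and i: "i \<in> I"
    and IH: "bij_betw (conj_net (subnet f (I-{i}) (z(i:=a)))) (points (I-{i})) (points (I-{i}))"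
  shows "bij_betw (\<lambda>x. (conj_net (subnet f I z) x)(i:=False)) {x\<in>points I. x i = a} (points (I-{i}))"
proof -
  have r: "bij_betw (\<lambda>x. x(i:=False)) {x\<in>points I. x i = a} (points (I-{i}))"
    by (rule bij_betw_byWitness[where f'="\<lambda>w. w(i:=a)"])
       (use i in \<open>auto simp: points_def fun_eq_iff split: if_splits\<close>)
  have "bij_betw (conj_net (subnet f (I-{i}) (z(i:=a))) \<circ> (\<lambda>x. x(i:=False))) {x\<in>points I. x i = a} (points (I-{i}))"
    by (rule bij_betw_trans[OF r IH])
  thus ?thesis
    by (rule bij_betw_cong[THEN iffD1, rotated]) (use subnet_restrict[OF z i] in auto)
qed

theorem corollary1:
  fixes f :: "('v::finite \<Rightarrow> bool) \<Rightarrow> ('v \<Rightarrow> bool)"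
  shows "(\<forall>I z. I \<noteq> {} \<and> z \<in> points (- I) \<longrightarrow>
            bij_betw (conj_net (subnet f I z)) (points I) (points I))
         \<longleftrightarrow>
         \<not> (\<exists>I z. I \<noteq> {} \<and> z \<in> points (- I) \<and>
            (even_self_dual I (subnet f I z) \<or> odd_self_dual I (subnet f I z)))"
proof
  assume H: "\<forall>I z. I \<noteq> {} \<and> z \<in> points (- I) \<longrightarrow>
            bij_betw (conj_net (subnet f I z)) (points I) (points I)"
  show "\<not> (\<exists>I z. I \<noteq> {} \<and> z \<in> points (- I) \<and>
            (even_self_dual I (subnet f I z) \<or> odd_self_dual I (subnet f I z)))"
  proof
    assume "\<exists>I z. I \<noteq> {} \<and> z \<in> points (- I) \<and>
            (even_self_dual I (subnet f I z) \<or> odd_self_dual I (subnet f I z))"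
    then obtain I z where Iz: "I \<noteq> {}" "z \<in> points (- I)"
      and d: "even_net I (subnet f I z) \<or> odd_net I (subnet f I z)"
      unfolding even_self_dual_def odd_self_dual_def by blast
    have im: "conj_net (subnet f I z) ` points I = points I"
    proof -
      have "bij_betw (conj_net (subnet f I z)) (points I) (points I)" using H Iz by simp
      thus ?thesis by (rule bij_betw_imp_surj_on)
    qed
    obtain i where i: "i \<in> I" using Iz by blast
    have p1: "(\<lambda>v. v = i) \<in> points I" "weight I (\<lambda>v. v = i) = 1"
    proof -
      have "{v\<in>I. v = i} = {i}" using i by auto
      thus "(\<lambda>v. v = i) \<in> points I" "weight I (\<lambda>v. v = i) = 1"
        using i unfolding points_def weight_def by auto
    qed
    have p0: "(\<lambda>v. False) \<in> points I" "weight I (\<lambda>v. False) = 0"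
      unfolding points_def weight_def by auto
    have "points I = {x\<in>points I. even (weight I x)} \<or> points I = {x\<in>points I. odd (weight I x)}"
      using d im unfolding even_net_def odd_net_def by simp
    thus False
    proof (elim disjE)
      assume e: "points I = {x\<in>points I. even (weight I x)}"
      have "(\<lambda>v. v = i) \<in> {x\<in>points I. even (weight I x)}" using p1(1) e by blast
      thus False using p1(2) by simp
    next
      assume e: "points I = {x\<in>points I. odd (weight I x)}"
      have "(\<lambda>v. False) \<in> {x\<in>points I. odd (weight I x)}" using p0(1) e by blast
      thus False using p0(2) by simp
    qed
  qed
next
  assume H: "\<not> (\<exists>I z. I \<noteq> {} \<and> z \<in> points (- I) \<and>
            (even_self_dual I (subnet f I z) \<or> odd_self_dual I (subnet f I z)))"
  have "\<forall>I z. card I = n \<longrightarrow> z \<in> points (- I) \<longrightarrow>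
            bij_betw (conj_net (subnet f I z)) (points I) (points I)" for n
  proof (induction n rule: less_induct)
    case (less n)
    show ?case
    proof (intro allI impI)
      fix I :: "'v set" and z assume cI: "card I = n" and z: "z \<in> points (- I)"
      let ?h = "subnet f I z"
      let ?g = "conj_net ?h"
      show "bij_betw ?g (points I) (points I)"
      proof (cases "I = {}")
        case True
        have P: "points I = {\<lambda>v. False}" using True unfolding points_def by auto
        show ?thesis using subnet_into[of f I z] unfolding P bij_betw_def by auto
      next
        case False
        show ?thesis
        proof (rule ccontr)
          assume nb: "\<not> ?thesis"
          have fib: "bij_betw (\<lambda>x. (?g x)(i:=False)) {x\<in>points I. x i = a} (points (I-{i}))"
            if i: "i \<in> I" for i a
          proof (rule fib_bij[OF z i])
            have "card (I - {i}) < n" using card_Diff1_less[OF finite i] cI by simp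
            moreover have "z(i:=a) \<in> points (- (I - {i}))" using z unfolding points_def by auto
            ultimately show "bij_betw (conj_net (subnet f (I-{i}) (z(i:=a)))) (points (I-{i})) (points (I-{i}))"
              using less.IH by blast
          qed
          have K: "(?g ` points I = {x\<in>points I. even (weight I x)} \<or> ?g ` points I = {x\<in>points I. odd (weight I x)})
             \<and> (\<forall>x\<in>points I. ?g (bxor x (ones I)) = ?g x)"
            by (rule key[OF False subnet_into fib nb])
          have sd: "self_dual I ?h"
            unfolding self_dual_def
          proof
            fix x assume x: "x \<in> points I"
            have e: "?g (bxor x (ones I)) = ?g x" using K x by blast
            show "?h (bxor x (ones I)) = bxor (?h x) (ones I)"
            proof
              fix v
              show "?h (bxor x (ones I)) v = bxor (?h x) (ones I) v"
              proof (cases "v \<in> I")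
                case True
                have "?g (bxor x (ones I)) v = ?g x v" using e by simp
                thus ?thesis using True unfolding conj_net_def bxor_def ones_def by auto
              next
                case False
                thus ?thesis unfolding subnet_def bxor_def ones_def by auto
              qed
            qed
          qed
          have "even_self_dual I ?h \<or> odd_self_dual I ?h"
            using K sd unfolding even_self_dual_def odd_self_dual_def even_net_def odd_net_def by blast
          thus False using H False z by blast
        qed
      qed
    qed
  qed
  thus "\<forall>I z. I \<noteq> {} \<and> z \<in> points (- I) \<longrightarrow>
            bij_betw (conj_net (subnet f I z)) (points I) (points I)" by blast
qed

end
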